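(* The constantly rebalanced portfolio strategy $\mathrm{CRP}$ and the constantly rebalanced portfolio strategy with side information $\mathrm{CRP}_{\mathrm{side}}$ (for any side-information vectors $\mathbf v_t$ and any function $\mathbf f$ as below) are universalizable.
   Context: Market with $m\ge2$ assets and return vectors $\mathbf x_t\in(0,\infty)^m$, $t\ge0$. $\mathcal W_m=\{\mathbf w\in[0,1]^m:\sum_i w_i=1\}$. $\mathrm{CRP}$ has parameter space $\mathcal W_m$ and description $\mathrm{CRP}_t(\mathbf w)=\mathbf w$. $\mathrm{CRP}_{\mathrm{side}}$: given $k\ge1$, side-information vectors $\mathbf v_t\in\mathbb R^{q}$ and a function $\mathbf f=(f_1,\dots,f_k):\mathbb R^q\to[0,1]^k$ with $\sum_j f_j\equiv1$, its parameter space is $\mathcal W_m^k$ and its description is $\mathrm{CRP}_{\mathrm{side},t}(\mathbf w_1,\dots,\mathbf w_k)=\sum_{j=1}^k f_j(\mathbf v_t)\mathbf w_j$. General notions: for a strategy $S$ with parameter space $\mathbb W$ (a finite product of simplices) and descriptions $S_t(\mathbf w)\in\mathcal W_m$, $\mathcal R_n(S(\mathbf w))=\prod_{t=0}^{n-1}S_t(\mathbf w)\cdot\mathbf x_t$ ($\mathcal R_0\equiv1$), $\mathcal L_n=\frac1n\log\mathcal R_n$, similarly for parameter-free strategies. $\mu$ is the uniform probability measure on $\mathbb W$ and $\mathcal U(S)$ has $\mathcal U_t(S)=\int_{\mathbb W}S_t\mathcal R_t\,d\mu/\int_{\mathbb W}\mathcal R_t\,d\mu$. $U$ is a universalization of $S$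 if there is $\eta_n\to0$, independent of market data, with $\mathcal L_n(U)\ge\sup_{\mathbf w}\mathcal L_n(S(\mathbf w))-\eta_n$ for all $n$ and all market data. The $\varepsilon$-modification is $\bar S_t(\mathbf w)=(1-\frac{\varepsilon}{2(t+1)^2})S_t(\mathbf w)+\frac{\varepsilon}{2m(t+1)^2}(1,\dots,1)$; $S$ is universalizable if for every $\varepsilon\in(0,1)$, $\mathcal U(\bar S)$ is a universalization of $S$. *)

theory Defs
  imports "HOL-Analysis.Analysis"
begin

text \<open>There are m assets, indexed by 0..m-1. A vector in R^m (portfolio or
return vector) is a function nat => real of which only the entries below m matter.
Market data is a sequence x :: nat => nat => real, x t i being the return of asset i at
time t. A parameter of a strategy with parameter space (W_m)^k is a function
w :: nat => nat => real, w j being the j-th portfolio (j < k).\<close>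

type_synonym pvec = "nat \<Rightarrow> real"
type_synonym market = "nat \<Rightarrow> pvec"
type_synonym param = "nat \<Rightarrow> pvec"

type_synonym pstrategy = "market \<Rightarrow> nat \<Rightarrow> param \<Rightarrow> pvec"
type_synonym strategy = "market \<Rightarrow> nat \<Rightarrow> pvec"

definition valid_market :: "nat \<Rightarrow> market \<Rightarrow> bool" where
  "valid_market m x \<longleftrightarrow> (\<forall>t. \<forall>i<m. x t i > 0)"

definition asset_simplex :: "nat \<Rightarrow> pvec set" where
  "asset_simplex m = {w \<in> ({..<m} \<rightarrow>\<^sub>E UNIV). (\<forall>i<m. 0 \<le> w i \<and> w i \<le> 1) \<and> (\<Sum>i<m. w i) = 1}"

definition paramspace :: "nat \<Rightarrow> nat \<Rightarrow> param set" where
  "paramspace m k = {..<k} \<rightarrow>\<^sub>E asset_simplex m"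

definition pdot :: "nat \<Rightarrow> pvec \<Rightarrow> pvec \<Rightarrow> real" where
  "pdot m b y = (\<Sum>i<m. b i * y i)"

definition wealth :: "nat \<Rightarrow> strategy \<Rightarrow> market \<Rightarrow> nat \<Rightarrow> real" where
  "wealth m U x n = (\<Prod>t<n. pdot m (U x t) (x t))"

definition growth :: "nat \<Rightarrow> strategy \<Rightarrow> market \<Rightarrow> nat \<Rightarrow> real" where
  "growth m U x n = ln (wealth m U x n) / real n"

definition fix_param :: "pstrategy \<Rightarrow> param \<Rightarrow> strategy" where
  "fix_param S w = (\<lambda>x t. S x t w)"

text \<open>Uniform probability measure on (W_m)^k: the free coordinates y(j,i), j<k, i<m-1,
are uniformly distributed (w.r.t. Lebesgue measure) on the product of the sets
{y >= 0, sum y <= 1}; the last coordinate is 1 minus the sum of the others.\<close>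
definition free_coords :: "nat \<Rightarrow> nat \<Rightarrow> (nat \<times> nat) set" where
  "free_coords m k = {..<k} \<times> {..<m - 1}"

definition lebesgue_coords :: "nat \<Rightarrow> nat \<Rightarrow> (nat \<times> nat \<Rightarrow> real) measure" where
  "lebesgue_coords m k = PiM (free_coords m k) (\<lambda>_. lborel)"

definition coord_domain :: "nat \<Rightarrow> nat \<Rightarrow> (nat \<times> nat \<Rightarrow> real) set" where
  "coord_domain m k = {y \<in> space (lebesgue_coords m k).
      \<forall>j<k. (\<forall>i<m - 1. 0 \<le> y (j, i)) \<and> (\<Sum>i<m - 1. y (j, i)) \<le> 1}"

definition coords_to_param :: "nat \<Rightarrow> nat \<Rightarrow> (nat \<times> nat \<Rightarrow> real) \<Rightarrow> param" where
  "coords_to_param m k y = (\<lambda>j\<in>{..<k}. \<lambda>i\<in>{..<m}.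
      if i < m - 1 then y (j, i) else 1 - (\<Sum>i'<m - 1. y (j, i')))"

definition param_measure :: "nat \<Rightarrow> nat \<Rightarrow> param measure" where
  "param_measure m k =
     distr (uniform_measure (lebesgue_coords m k) (coord_domain m k))
           (PiM {..<k} (\<lambda>_. PiM {..<m} (\<lambda>_. lborel)))
           (coords_to_param m k)"

definition univ :: "nat \<Rightarrow> nat \<Rightarrow> pstrategy \<Rightarrow> strategy" where
  "univ m k S = (\<lambda>x t i.
      (\<integral>w. S x t w i * wealth m (fix_param S w) x t \<partial>param_measure m k) /
      (\<integral>w. wealth m (fix_param S w) x t \<partial>param_measure m k))"

definition universalization :: "nat \<Rightarrow> nat \<Rightarrow> strategy \<Rightarrow> pstrategy \<Rightarrow> bool" where
  "universalization m k U S \<longleftrightarrow>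
     (\<exists>\<eta> :: nat \<Rightarrow> real. \<eta> \<longlonglongrightarrow> 0 \<and>
        (\<forall>n\<ge>1. \<forall>x. valid_market m x \<longrightarrow>
           (\<forall>w\<in>paramspace m k. growth m U x n \<ge> growth m (fix_param S w) x n - \<eta> n)))"

definition eps_mod :: "nat \<Rightarrow> real \<Rightarrow> pstrategy \<Rightarrow> pstrategy" where
  "eps_mod m \<epsilon> S = (\<lambda>x t w i.
      (1 - \<epsilon> / (2 * (real t + 1)^2)) * S x t w i + \<epsilon> / (2 * real m * (real t + 1)^2))"

definition universalizable :: "nat \<Rightarrow> nat \<Rightarrow> pstrategy \<Rightarrow> bool" where
  "universalizable m k S \<longleftrightarrow>
     (\<forall>\<epsilon>. 0 < \<epsilon> \<and> \<epsilon> < 1 \<longrightarrow> universalization m k (univ m k (eps_mod m \<epsilon> S)) S)"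

text \<open>CRP (parameter space W_m, i.e. k = 1) and CRP with side information
(parameter space (W_m)^k).\<close>
definition CRP :: pstrategy where
  "CRP = (\<lambda>x t w. w 0)"

definition CRP_side :: "nat \<Rightarrow> (nat \<Rightarrow> real^'q) \<Rightarrow> (real^'q \<Rightarrow> nat \<Rightarrow> real) \<Rightarrow> pstrategy" where
  "CRP_side k v f = (\<lambda>x t w i. \<Sum>j<k. f (v t) j * w j i)"

end

theory Submission
  imports Defs "HOL-Probability.Probability_Measure" "HOL-Real_Asymp.Real_Asymp"
begin


abbreviation PM :: "nat \<Rightarrow> nat \<Rightarrow> param measure" where
  "PM m k \<equiv> PiM {..<k} (\<lambda>_. PiM {..<m} (\<lambda>_. lborel))"

abbreviation nu :: "nat \<Rightarrow> nat \<Rightarrow> (nat \<times> nat \<Rightarrow> real) measure" where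
  "nu m k \<equiv> uniform_measure (lebesgue_coords m k) (coord_domain m k)"

lemma fc_finite: "finite (free_coords m k)" by (simp add: free_coords_def)

lemma fc_card: "card (free_coords m k) = k * (m - 1)"
  by (simp add: free_coords_def card_cartesian_product)

lemma coord_meas[measurable]:
  "(\<lambda>y. y p) \<in> borel_measurable (lebesgue_coords m k)"
proof (cases "p \<in> free_coords m k")
  case True
  then show ?thesis unfolding lebesgue_coords_def
    by (subst measurable_lborel1[symmetric], rule measurable_component_singleton)
next
  case False
  have "\<And>w. w \<in> space (lebesgue_coords m k) \<Longrightarrow> w p = undefined"
    using False by (cases p) (auto simp: lebesgue_coords_def space_PiM PiE_def extensional_def)
  then have "(\<lambda>y. y p) \<in> borel_measurable (lebesgue_coords m k) \<longleftrightarrow> (\<lambda>y. undefined::real) \<in> borel_measurable (lebesgue_coords m k)"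
    by (intro measurable_cong) simp
  then show ?thesis by simp
qed

lemma D_sets[measurable]: "coord_domain m k \<in> sets (lebesgue_coords m k)"
  unfolding coord_domain_def by measurable

lemma param_meas[measurable]: "(\<lambda>w. w j i) \<in> borel_measurable (PM m k)"
proof (cases "j < k")
  case True
  have c1: "(\<lambda>w. w j) \<in> measurable (PM m k) (PiM {..<m} (\<lambda>_. lborel))"
    by (rule measurable_component_singleton) (use True in auto)
  show ?thesis
  proof (cases "i < m")
    case True
    have "(\<lambda>w. (\<lambda>z. z i) (w j)) \<in> measurable (PM m k) lborel"
      by (rule measurable_compose[OF c1 measurable_component_singleton]) (use True in auto)
    then show ?thesis by simp
  next
    case False
    have "\<And>w. w \<in> space (PM m k) \<Longrightarrow> w j i = undefined"
      using False \<open>j < k\<close> by (auto simp: space_PiM PiE_def extensional_def)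
    then have "(\<lambda>w. w j i) \<in> borel_measurable (PM m k) \<longleftrightarrow> (\<lambda>y. undefined::real) \<in> borel_measurable (PM m k)"
      by (intro measurable_cong) simp
    then show ?thesis by simp
  qed
next
  case False
  have "\<And>w. w \<in> space (PM m k) \<Longrightarrow> w j i = undefined i"
    using False by (auto simp: space_PiM PiE_def extensional_def)
  then have "(\<lambda>w. w j i) \<in> borel_measurable (PM m k) \<longleftrightarrow> (\<lambda>y. undefined i::real) \<in> borel_measurable (PM m k)"
    by (intro measurable_cong) simp
  then show ?thesis by simp
qed

lemma phi_meas[measurable]: "coords_to_param m k \<in> measurable (lebesgue_coords m k) (PM m k)"
  unfolding coords_to_param_def
proof (intro measurable_restrict)
  fix j i
  show "(\<lambda>y. if i < m - 1 then y (j, i) else 1 - (\<Sum>i'<m - 1. y (j, i'))) \<in> measurable (lebesgue_coords m k) lborel"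
    by (cases "i < m - 1") simp_all
qed

lemma phi_meas_nu: "coords_to_param m k \<in> measurable (nu m k) (PM m k)"
  using phi_meas by (simp cong: measurable_cong_sets)

lemma box_sets:
  "PiE (free_coords m k) (\<lambda>p. {lo p .. hi p}) \<in> sets (lebesgue_coords m k)"
  unfolding lebesgue_coords_def by (intro sets_PiM_I_finite fc_finite) simp

lemma box_emeasure:
  assumes "0 \<le> h"
  shows "emeasure (lebesgue_coords m k) (PiE (free_coords m k) (\<lambda>p. {lo p .. lo p + h}))
          = ennreal (h ^ (k * (m - 1)))"
proof -
  interpret product_sigma_finite "\<lambda>_::nat\<times>nat. lborel::real measure" by standard
  have "emeasure (lebesgue_coords m k) (PiE (free_coords m k) (\<lambda>p. {lo p .. lo p + h}))
        = (\<Prod>p\<in>free_coords m k. emeasure lborel {lo p .. lo p + h})"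
    unfolding lebesgue_coords_def by (rule emeasure_PiM) (auto simp: fc_finite)
  also have "\<dots> = (\<Prod>p\<in>free_coords m k. ennreal h)"
    using assms by simp
  also have "\<dots> = ennreal (h ^ (k * (m - 1)))"
    using assms by (simp add: prod_ennreal fc_card ennreal_power)
  finally show ?thesis .
qed

lemma box_measure:
  assumes "0 \<le> h"
  shows "measure (lebesgue_coords m k) (PiE (free_coords m k) (\<lambda>p. {lo p .. lo p + h}))
          = h ^ (k * (m - 1))"
  using box_emeasure[OF assms] assms by (simp add: measure_def)

lemma D_sub_box: "coord_domain m k \<subseteq> PiE (free_coords m k) (\<lambda>p. {0 .. 0 + 1})"
proof
  fix y assume y: "y \<in> coord_domain m k"
  show "y \<in> PiE (free_coords m k) (\<lambda>p. {0 .. 0 + 1})"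
  proof -
    have sp: "y \<in> PiE (free_coords m k) (\<lambda>_. UNIV)"
      using y by (auto simp: coord_domain_def lebesgue_coords_def space_PiM)
    have "y p \<in> {0..0+1}" if p: "p \<in> free_coords m k" for p
    proof -
      obtain j i where pj: "p = (j, i)" "j < k" "i < m - 1" using p by (auto simp: free_coords_def)
      have nn: "\<forall>i<m - 1. 0 \<le> y (j, i)" and s: "(\<Sum>i<m - 1. y (j, i)) \<le> 1"
        using y pj by (auto simp: coord_domain_def)
      have "y (j, i) \<le> (\<Sum>i<m - 1. y (j, i))"
        by (rule member_le_sum) (use nn pj in auto)
      then show ?thesis using s nn pj by auto
    qed
    then show ?thesis using sp by (auto simp: PiE_iff)
  qed
qed

context
  fixes m k :: nat
  assumes m2: "m \<ge> 2"
begin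

lemma box_small_sub_D: "PiE (free_coords m k) (\<lambda>p. {0 .. 0 + 1 / real m}) \<subseteq> coord_domain m k"
proof
  fix y assume y: "y \<in> PiE (free_coords m k) (\<lambda>p. {0 .. 0 + 1 / real m})"
  have sp: "y \<in> space (lebesgue_coords m k)"
    using y by (auto simp: lebesgue_coords_def space_PiM PiE_iff)
  have "(\<forall>i<m - 1. 0 \<le> y (j, i)) \<and> (\<Sum>i<m - 1. y (j, i)) \<le> 1" if j: "j < k" for j
  proof -
    have b: "0 \<le> y (j, i) \<and> y (j, i) \<le> 1 / real m" if "i < m - 1" for i
      using y j that by (auto simp: PiE_iff free_coords_def)
    have "(\<Sum>i<m - 1. y (j, i)) \<le> (\<Sum>i<m - 1. 1 / real m)"
      by (rule sum_mono) (use b in auto)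
    also have "\<dots> = real (m - 1) / real m" by simp
    also have "\<dots> \<le> 1" using m2 by simp
    finally show ?thesis using b by auto
  qed
  then show "y \<in> coord_domain m k" using sp by (auto simp: coord_domain_def)
qed

lemma D_measure_pos: "0 < measure (lebesgue_coords m k) (coord_domain m k)"
  and D_measure_le1: "measure (lebesgue_coords m k) (coord_domain m k) \<le> 1"
  and D_emeasure_ne0: "emeasure (lebesgue_coords m k) (coord_domain m k) \<noteq> 0"
  and D_emeasure_fin: "emeasure (lebesgue_coords m k) (coord_domain m k) < \<infinity>"
proof -
  have e1: "emeasure (lebesgue_coords m k) (coord_domain m k) \<le> ennreal (1 ^ (k * (m - 1)))"
    using emeasure_mono[OF D_sub_box[of m k] box_sets[of m k "\<lambda>_. 0" "\<lambda>_. 0 + 1"]] box_emeasure[of 1 m k "\<lambda>_. 0"]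
    by simp
  have e2: "ennreal ((1 / real m) ^ (k * (m - 1))) \<le> emeasure (lebesgue_coords m k) (coord_domain m k)"
    using emeasure_mono[OF box_small_sub_D D_sets] box_emeasure[of "1 / real m" m k "\<lambda>_. 0"] by simp
  have pos: "0 < (1 / real m) ^ (k * (m - 1))" using m2 by simp
  show fin: "emeasure (lebesgue_coords m k) (coord_domain m k) < \<infinity>"
    using e1 by (simp add: le_less_trans)
  show ne: "emeasure (lebesgue_coords m k) (coord_domain m k) \<noteq> 0"
    using e2 pos by (metis ennreal_eq_0_iff leD not_le_imp_less order_le_less_trans le_zero_eq)
  have eq: "emeasure (lebesgue_coords m k) (coord_domain m k) = ennreal (measure (lebesgue_coords m k) (coord_domain m k))"
    using fin by (simp add: emeasure_eq_ennreal_measure less_top)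
  show "measure (lebesgue_coords m k) (coord_domain m k) \<le> 1"
    using e1 eq by simp
  show "0 < measure (lebesgue_coords m k) (coord_domain m k)"
    using ne eq by (simp add: zero_less_measure_iff)
qed

lemma prob_nu: "prob_space (nu m k)"
  by (rule prob_space_uniform_measure) (use D_emeasure_ne0 D_emeasure_fin in auto)

lemma prob_mu: "prob_space (param_measure m k)"
  unfolding param_measure_def
  by (rule prob_space.prob_space_distr[OF prob_nu phi_meas_nu])

lemma integral_transfer:
  fixes g :: "param \<Rightarrow> real"
  assumes "g \<in> borel_measurable (PM m k)"
  shows "(\<integral>w. g w \<partial>param_measure m k) = (\<integral>y. g (coords_to_param m k y) \<partial>nu m k)"
  unfolding param_measure_def by (rule integral_distr[OF phi_meas_nu assms])

lemma integrable_nu: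
  fixes g :: "(nat \<times> nat \<Rightarrow> real) \<Rightarrow> real" and B :: real
  assumes "g \<in> borel_measurable (lebesgue_coords m k)" "\<And>y. y \<in> coord_domain m k \<Longrightarrow> \<bar>g y\<bar> \<le> B"
  shows "integrable (nu m k) g"
proof -
  interpret prob_space "nu m k" by (rule prob_nu)
  show ?thesis
  proof (rule integrable_const_bound[where B=B])
    show "AE y in nu m k. norm (g y) \<le> B"
      by (rule AE_uniform_measureI[OF D_sets]) (use assms(2) in auto)
    show "g \<in> borel_measurable (nu m k)" using assms(1) by (simp cong: measurable_cong_sets)
  qed
qed

lemma int_lower:
  assumes int: "integrable (nu m k) h"
    and nn: "\<And>y. y \<in> coord_domain m k \<Longrightarrow> 0 \<le> h y"
    and lb: "\<And>y. y \<in> A \<Longrightarrow> c \<le> h y"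
    and AD: "A \<subseteq> coord_domain m k" and As: "A \<in> sets (lebesgue_coords m k)" and c0: "0 \<le> c"
  shows "c * measure (lebesgue_coords m k) A \<le> (\<integral>y. h y \<partial>nu m k)"
proof -
  interpret prob_space "nu m k" by (rule prob_nu)
  let ?L = "lebesgue_coords m k" and ?D = "coord_domain m k"
  have Asn: "A \<in> sets (nu m k)" using As by simp
  have fA: "emeasure (nu m k) A < \<infinity>"
    using emeasure_finite[of A] by (metis infinity_ennreal_def top.not_eq_extremum)
  have intA: "integrable (nu m k) (\<lambda>y. c * indicator A y)"
    by (intro integrable_mult_right integrable_real_indicator Asn fA)
  have "(\<integral>y. c * indicator A y \<partial>nu m k) \<le> (\<integral>y. h y \<partial>nu m k)"
  proof (rule integral_mono_AE[OF intA int])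
    show "AE y in nu m k. c * indicator A y \<le> h y"
      by (rule AE_uniform_measureI[OF D_sets]) (use nn lb c0 in \<open>auto split: split_indicator\<close>)
  qed
  moreover have "(\<integral>y. c * indicator A y \<partial>nu m k) = c * measure (nu m k) A"
    using Asn sets.sets_into_space[OF Asn] by (simp add: Int_absorb2)
  moreover have "measure (nu m k) A = measure ?L A / measure ?L ?D"
    using D_emeasure_ne0 D_emeasure_fin As AD by (simp add: Int_absorb1)
  moreover have "measure ?L A \<le> measure ?L A / measure ?L ?D"
    using D_measure_pos D_measure_le1 by (simp add: le_divide_eq mult_left_le)
  ultimately show ?thesis using c0 by (smt (verit) mult_left_mono)
qed

end



lemma ps_D: "w \<in> paramspace m k \<Longrightarrow> j < k \<Longrightarrow> i < m \<Longrightarrow> 0 \<le> w j i \<and> w j i \<le> 1"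
  by (auto simp: paramspace_def asset_simplex_def PiE_iff)

lemma ps_sum: "w \<in> paramspace m k \<Longrightarrow> j < k \<Longrightarrow> (\<Sum>i<m. w j i) = 1"
  by (auto simp: paramspace_def asset_simplex_def PiE_iff)

lemma pdot_pos_aux:
  fixes b y :: "nat \<Rightarrow> real"
  assumes "\<And>i. i < m \<Longrightarrow> 0 \<le> b i" "(\<Sum>i<m. b i) = 1" "\<And>i. i < m \<Longrightarrow> 0 < y i"
  shows "0 < (\<Sum>i<m. b i * y i)"
proof -
  obtain i where i: "i < m" "0 < b i"
  proof (rule ccontr)
    assume nt: "\<not> thesis"
    note ob = that
    have "\<forall>i<m. b i = 0"
    proof (intro allI impI)
      fix i assume im: "i < m"
      have "\<not> 0 < b i" using nt ob im by blast
      then show "b i = 0" using assms(1)[OF im] by linarith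
    qed
    then have "(\<Sum>i<m. b i) = 0" by simp
    then show False using assms(2) by simp
  qed
  have nn: "\<And>x. x < m \<Longrightarrow> 0 \<le> b x * y x"
    using assms(1,3) by (simp add: less_imp_le)
  have "b i * y i \<le> (\<Sum>i<m. b i * y i)"
    by (rule member_le_sum) (use i nn in auto)
  moreover have "0 < b i * y i" using i assms(3) by simp
  ultimately show ?thesis by linarith
qed

lemma prod_frac: "(\<Prod>t<n. (real t + 1) / (real t + 2)) = 1 / (real n + 1)"
  by (induction n) (auto simp: field_simps)

lemma bern: "1 / (real n + 1) \<le> (1 - 1 / (real n + 1)) ^ n"
proof -
  have "1 + real n * (- 1 / (real n + 1)) \<le> (1 + - 1 / (real n + 1)) ^ n"
    by (rule Bernoulli_inequality) (simp add: field_simps)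
  moreover have "1 + real n * (- 1 / (real n + 1)) = 1 / (real n + 1)"
    by (simp add: field_simps)
  ultimately show ?thesis by simp
qed

definition eta :: "nat \<Rightarrow> nat \<Rightarrow> nat \<Rightarrow> real" where
  "eta m k n = (2 * ln (real n + 1) + real (k * (m - 1)) * ln (real m * (real n + 1))) / real n"

lemma eta_tendsto: assumes "m \<ge> 2" shows "eta m k \<longlonglongrightarrow> 0"
proof -
  have L1: "(\<lambda>n. ln (real n + 1) / real n) \<longlonglongrightarrow> 0" by real_asymp
  have L2: "(\<lambda>n. 1 / real n) \<longlonglongrightarrow> 0" by real_asymp
  define d where "d = real (k * (m - 1))"
  have eq: "eta m k = (\<lambda>n. (2 + d) * (ln (real n + 1) / real n) + (d * ln (real m)) * (1 / real n))"
  proof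
    fix n
    have lneq: "ln (real m * (real n + 1)) = ln (real m) + ln (real n + 1)"
      using assms by (simp add: ln_mult)
    show "eta m k n = (2 + d) * (ln (real n + 1) / real n) + (d * ln (real m)) * (1 / real n)"
      unfolding eta_def d_def[symmetric] lneq by (simp add: add_divide_distrib ring_distribs)
  qed
  have "(\<lambda>n. (2 + d) * (ln (real n + 1) / real n) + (d * ln (real m)) * (1 / real n)) \<longlonglongrightarrow> (2 + d) * 0 + (d * ln (real m)) * 0"
    by (intro tendsto_intros L1 L2)
  then show ?thesis unfolding eq by simp
qed



context
  fixes m k :: nat and v :: "nat \<Rightarrow> real^'q::finite" and f :: "real^'q \<Rightarrow> nat \<Rightarrow> real"
    and x :: market and \<epsilon> :: real
  assumes m2: "m \<ge> 2" and fb: "\<forall>z. \<forall>j<k. 0 \<le> f z j \<and> f z j \<le> 1"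
    and fs: "\<forall>z. (\<Sum>j<k. f z j) = 1"
    and vm: "valid_market m x" and e0: "0 < \<epsilon>" and e1: "\<epsilon> < 1"
begin

abbreviation "S \<equiv> CRP_side k v f"
abbreviation "Se \<equiv> eps_mod m \<epsilon> (CRP_side k v f)"
abbreviation "RR n w \<equiv> wealth m (fix_param (eps_mod m \<epsilon> (CRP_side k v f)) w) x n"
abbreviation "WW n w \<equiv> wealth m (fix_param (CRP_side k v f) w) x n"
abbreviation "dl t \<equiv> \<epsilon> / (2 * (real t + 1)^2)"
abbreviation "\<phi> \<equiv> coords_to_param m k"

lemma xpos: "i < m \<Longrightarrow> 0 < x t i" using vm by (simp add: valid_market_def)

lemma S_eq: "S x t w i = (\<Sum>j<k. f (v t) j * w j i)" by (simp add: CRP_side_def)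

lemma Se_eq: "Se x t w i = (1 - dl t) * S x t w i + \<epsilon> / (2 * real m * (real t + 1)^2)"
  by (simp add: eps_mod_def)

lemma RR_eq: "RR n w = (\<Prod>t<n. \<Sum>i<m. Se x t w i * x t i)"
  by (simp add: wealth_def fix_param_def pdot_def)

lemma WW_eq: "WW n w = (\<Prod>t<n. \<Sum>i<m. S x t w i * x t i)"
  by (simp add: wealth_def fix_param_def pdot_def)

lemma Se_meas[measurable]: "(\<lambda>w. Se x t w i) \<in> borel_measurable (PM m k)"
  unfolding eps_mod_def CRP_side_def by measurable

lemma RR_meas[measurable]: "(\<lambda>w. RR n w) \<in> borel_measurable (PM m k)"
  unfolding wealth_def fix_param_def pdot_def eps_mod_def CRP_side_def by measurable

lemma dl_pos: "0 < dl t" using e0 by simp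

lemma dl_le: "dl t \<le> 1 / (real t + 2)"
proof -
  have "\<epsilon> * (real t + 2) \<le> 1 * (real t + 2)" using e1 by (intro mult_right_mono) auto
  also have "\<dots> \<le> 2 * (real t + 1)^2" by (simp add: power2_eq_square algebra_simps)
  finally show ?thesis by (simp add: field_simps)
qed

lemma dl_frac: "(real t + 1) / (real t + 2) \<le> 1 - dl t"
proof -
  have "(real t + 1) / (real t + 2) = 1 - 1 / (real t + 2)" by (simp add: field_simps)
  then show ?thesis using dl_le[of t] by simp
qed

lemma S_bounds: "w \<in> paramspace m k \<Longrightarrow> i < m \<Longrightarrow> 0 \<le> S x t w i \<and> S x t w i \<le> 1"
proof -
  assume w: "w \<in> paramspace m k" and i: "i < m"
  have "0 \<le> (\<Sum>j<k. f (v t) j * w j i)"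
    using fb ps_D[OF w _ i] by (intro sum_nonneg) auto
  moreover have "(\<Sum>j<k. f (v t) j * w j i) \<le> (\<Sum>j<k. f (v t) j)"
    using fb ps_D[OF w _ i] by (intro sum_mono) (auto intro: mult_left_le)
  ultimately show ?thesis using fs by (simp add: S_eq)
qed

lemma S_sum: "w \<in> paramspace m k \<Longrightarrow> (\<Sum>i<m. S x t w i) = 1"
proof -
  assume w: "w \<in> paramspace m k"
  have "(\<Sum>i<m. S x t w i) = (\<Sum>j<k. f (v t) j * (\<Sum>i<m. w j i))"
    by (simp add: S_eq sum_distrib_left sum.swap[of _ "{..<m}"])
  also have "\<dots> = (\<Sum>j<k. f (v t) j)" using ps_sum[OF w] by simp
  also have "\<dots> = 1" using fs by simp
  finally show ?thesis .
qed

lemma Se_bounds: "w \<in> paramspace m k \<Longrightarrow> i < m \<Longrightarrow> 0 \<le> Se x t w i \<and> Se x t w i \<le> 1"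
proof -
  assume w: "w \<in> paramspace m k" and i: "i < m"
  have c: "\<epsilon> / (2 * real m * (real t + 1)^2) \<le> dl t"
    using m2 e0 by (intro divide_left_mono) (auto intro!: mult_pos_pos)
  have c0: "0 \<le> \<epsilon> / (2 * real m * (real t + 1)^2)" using e0 by simp
  have d1: "dl t \<le> 1" using dl_le[of t] by (smt (verit) divide_le_eq_1 of_nat_0_le_iff)
  have "0 \<le> (1 - dl t) * S x t w i" using S_bounds[OF w i] d1 by simp
  moreover have "(1 - dl t) * S x t w i \<le> 1 - dl t" using S_bounds[OF w i] d1 by (simp add: mult_left_le)
  ultimately show ?thesis using c c0 by (simp add: Se_eq)
qed

lemma WW_pos: "w \<in> paramspace m k \<Longrightarrow> 0 < WW n w"
  unfolding WW_eq
  by (intro prod_pos ballI pdot_pos_aux) (auto simp: S_bounds S_sum xpos)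

definition BB :: "nat \<Rightarrow> real" where "BB n = (\<Prod>t<n. \<Sum>i<m. x t i)"

lemma RR_bounds: "w \<in> paramspace m k \<Longrightarrow> 0 \<le> RR n w \<and> RR n w \<le> BB n"
proof -
  assume w: "w \<in> paramspace m k"
  have fac: "0 \<le> (\<Sum>i<m. Se x t w i * x t i) \<and> (\<Sum>i<m. Se x t w i * x t i) \<le> (\<Sum>i<m. x t i)" for t
  proof
    show "0 \<le> (\<Sum>i<m. Se x t w i * x t i)"
      using Se_bounds[OF w] xpos by (intro sum_nonneg) (simp add: less_imp_le)
    show "(\<Sum>i<m. Se x t w i * x t i) \<le> (\<Sum>i<m. x t i)"
      using Se_bounds[OF w] xpos by (intro sum_mono) (simp add: less_imp_le mult_left_le_one_le)
  qed
  show ?thesis unfolding RR_eq BB_def using fac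
    by (auto intro!: prod_nonneg prod_mono)
qed

lemma phi_ps: assumes y: "y \<in> coord_domain m k" shows "\<phi> y \<in> paramspace m k"
proof -
  have "(\<lambda>i\<in>{..<m}. if i < m - 1 then y (j, i) else 1 - (\<Sum>i'<m - 1. y (j, i'))) \<in> asset_simplex m"
    if j: "j < k" for j
  proof -
    let ?g = "\<lambda>i\<in>{..<m}. if i < m - 1 then y (j, i) else 1 - (\<Sum>i'<m - 1. y (j, i'))"
    have nn: "\<forall>i<m - 1. 0 \<le> y (j, i)" and s: "(\<Sum>i<m - 1. y (j, i)) \<le> 1"
      using y j by (auto simp: coord_domain_def)
    have s0: "0 \<le> (\<Sum>i<m - 1. y (j, i))" using nn by (intro sum_nonneg) auto
    have b: "0 \<le> ?g i \<and> ?g i \<le> 1" if i: "i < m" for i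
    proof (cases "i < m - 1")
      case True
      have "y (j, i) \<le> (\<Sum>i<m - 1. y (j, i))"
        by (rule member_le_sum) (use nn True in auto)
      then show ?thesis using True i nn s by auto
    next
      case False
      then show ?thesis using i s s0 by auto
    qed
    have mm: "m = Suc (m - 1)" using m2 by simp
    have "(\<Sum>i<m. ?g i) = (\<Sum>i<m - 1. ?g i) + ?g (m - 1)"
      by (subst mm) (simp only: sum.lessThan_Suc diff_Suc_1)
    also have "(\<Sum>i<m - 1. ?g i) = (\<Sum>i<m - 1. y (j, i))"
      by (rule sum.cong) auto
    also have "?g (m - 1) = 1 - (\<Sum>i<m - 1. y (j, i))" using m2 by simp
    finally have "(\<Sum>i<m. ?g i) = 1" by simp
    then show ?thesis using b by (auto simp: asset_simplex_def)
  qed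
  then show ?thesis
    by (auto simp: paramspace_def coords_to_param_def)
qed


abbreviation "Abox w \<alpha> \<equiv> PiE (free_coords m k) (\<lambda>p. {(1 - \<alpha>) * w (fst p) (snd p) .. (1 - \<alpha>) * w (fst p) (snd p) + \<alpha> / real m})"

lemma Abox_mem:
  assumes "y \<in> Abox w \<alpha>" "j < k" "i < m - 1"
  shows "(1 - \<alpha>) * w j i \<le> y (j, i) \<and> y (j, i) \<le> (1 - \<alpha>) * w j i + \<alpha> / real m"
proof -
  have "(j, i) \<in> free_coords m k" using assms by (simp add: free_coords_def)
  then show ?thesis using assms(1) by (auto simp: PiE_iff)
qed

lemma wsum: "w \<in> paramspace m k \<Longrightarrow> j < k \<Longrightarrow> (\<Sum>i<m - 1. w j i) = 1 - w j (m - 1)"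
proof -
  assume w: "w \<in> paramspace m k" and j: "j < k"
  have mm: "m = Suc (m - 1)" using m2 by simp
  have "(\<Sum>i<m. w j i) = (\<Sum>i<m - 1. w j i) + w j (m - 1)"
    by (subst mm) (simp only: sum.lessThan_Suc diff_Suc_1)
  then show ?thesis using ps_sum[OF w j] by simp
qed

lemma Abox_sum:
  assumes w: "w \<in> paramspace m k" and y: "y \<in> Abox w \<alpha>" and j: "j < k"
  shows "(\<Sum>i<m - 1. y (j, i)) \<le> (1 - \<alpha>) * (1 - w j (m - 1)) + real (m - 1) * (\<alpha> / real m)"
proof -
  have "(\<Sum>i<m - 1. y (j, i)) \<le> (\<Sum>i<m - 1. (1 - \<alpha>) * w j i + \<alpha> / real m)"
    by (rule sum_mono) (use Abox_mem[OF y j] in auto)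
  also have "\<dots> = (1 - \<alpha>) * (\<Sum>i<m - 1. w j i) + real (m - 1) * (\<alpha> / real m)"
    by (simp add: sum.distrib sum_distrib_left)
  finally show ?thesis using wsum[OF w j] by simp
qed

lemma Abox_sub_D:
  assumes w: "w \<in> paramspace m k" and a0: "0 \<le> \<alpha>" and a1: "\<alpha> \<le> 1"
  shows "Abox w \<alpha> \<subseteq> coord_domain m k"
proof
  fix y assume y: "y \<in> Abox w \<alpha>"
  have sp: "y \<in> space (lebesgue_coords m k)"
    using y by (auto simp: lebesgue_coords_def space_PiM PiE_iff)
  have "(\<forall>i<m - 1. 0 \<le> y (j, i)) \<and> (\<Sum>i<m - 1. y (j, i)) \<le> 1" if j: "j < k" for j
  proof
    show "\<forall>i<m - 1. 0 \<le> y (j, i)"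
    proof (intro allI impI)
      fix i assume i: "i < m - 1"
      have "0 \<le> (1 - \<alpha>) * w j i" using a1 ps_D[OF w j, of i] i by simp
      then show "0 \<le> y (j, i)" using Abox_mem[OF y j i] by linarith
    qed
    have wl: "0 \<le> w j (m - 1)" "w j (m - 1) \<le> 1" using ps_D[OF w j, of "m - 1"] m2 by auto
    have q: "real (m - 1) * (\<alpha> / real m) \<le> \<alpha>"
      using m2 a0 by (simp add: field_simps)
    have "(1 - \<alpha>) * (1 - w j (m - 1)) \<le> 1 - \<alpha>" using wl a1 by (simp add: mult_left_le)
    then show "(\<Sum>i<m - 1. y (j, i)) \<le> 1" using Abox_sum[OF w y j] q by linarith
  qed
  then show "y \<in> coord_domain m k" using sp by (auto simp: coord_domain_def)
qed

lemma phi_val: "j < k \<Longrightarrow> i < m \<Longrightarrow> \<phi> y j i = (if i < m - 1 then y (j, i) else 1 - (\<Sum>i'<m - 1. y (j, i')))"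
  by (simp add: coords_to_param_def)

lemma Abox_phi:
  assumes w: "w \<in> paramspace m k" and a0: "0 \<le> \<alpha>" and a1: "\<alpha> \<le> 1"
    and y: "y \<in> Abox w \<alpha>" and j: "j < k" and i: "i < m"
  shows "(1 - \<alpha>) * w j i \<le> \<phi> y j i"
proof (cases "i < m - 1")
  case True
  then show ?thesis using Abox_mem[OF y j True] phi_val[OF j i] by simp
next
  case False
  then have im: "i = m - 1" using i by simp
  have q: "real (m - 1) * (\<alpha> / real m) \<le> \<alpha>"
    using m2 a0 by (simp add: field_simps)
  have "\<phi> y j i = 1 - (\<Sum>i'<m - 1. y (j, i'))" using phi_val[OF j i] False by simp
  moreover have "(1 - \<alpha>) * w j (m - 1) \<le> 1 - ((1 - \<alpha>) * (1 - w j (m - 1)) + real (m - 1) * (\<alpha> / real m))"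
    using q by (simp add: algebra_simps)
  ultimately show ?thesis using Abox_sum[OF w y j] unfolding im by linarith
qed

lemma RR_Suc: "RR (Suc n) w = RR n w * (\<Sum>i<m. Se x n w i * x n i)"
  by (simp add: RR_eq)

lemma RR_lower:
  assumes w: "w \<in> paramspace m k" and y: "y \<in> Abox w (1 / (real n + 1))"
  shows "(1 / (real n + 1))^2 * WW n w \<le> RR n (\<phi> y)"
proof -
  define \<alpha> where "\<alpha> = 1 / (real n + 1)"
  have a0: "0 \<le> \<alpha>" and a1: "\<alpha> \<le> 1" unfolding \<alpha>_def by (auto simp: field_simps)
  have y': "y \<in> Abox w \<alpha>" using y unfolding \<alpha>_def .
  have Sge: "(1 - \<alpha>) * S x t w i \<le> S x t (\<phi> y) i" if i: "i < m" for t i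
  proof -
    have "(1 - \<alpha>) * S x t w i = (\<Sum>j<k. f (v t) j * ((1 - \<alpha>) * w j i))"
      by (simp add: S_eq sum_distrib_left mult_ac)
    also have "\<dots> \<le> (\<Sum>j<k. f (v t) j * \<phi> y j i)"
      by (rule sum_mono, rule mult_left_mono) (use Abox_phi[OF w a0 a1 y' _ i] fb in auto)
    finally show ?thesis by (simp add: S_eq)
  qed
  have Sege: "(1 - dl t) * ((1 - \<alpha>) * S x t w i) \<le> Se x t (\<phi> y) i" if i: "i < m" for t i
  proof -
    have d1: "dl t \<le> 1" using dl_le[of t] by (smt (verit) divide_le_eq_1 of_nat_0_le_iff)
    have "(1 - dl t) * ((1 - \<alpha>) * S x t w i) \<le> (1 - dl t) * S x t (\<phi> y) i"
      by (rule mult_left_mono[OF Sge[OF i]]) (use d1 in simp)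
    moreover have "0 \<le> \<epsilon> / (2 * real m * (real t + 1)^2)" using e0 by simp
    ultimately show ?thesis by (simp add: Se_eq)
  qed
  define P where "P t = (\<Sum>i<m. S x t w i * x t i)" for t
  have P0: "0 \<le> P t" for t
    unfolding P_def using S_bounds[OF w] xpos by (intro sum_nonneg) (simp add: less_imp_le)
  have d1: "dl t \<le> 1" for t using dl_le[of t] by (smt (verit) divide_le_eq_1 of_nat_0_le_iff)
  have fac: "((1 - dl t) * (1 - \<alpha>)) * P t \<le> (\<Sum>i<m. Se x t (\<phi> y) i * x t i)" for t
  proof -
    have "((1 - dl t) * (1 - \<alpha>)) * P t = (\<Sum>i<m. ((1 - dl t) * ((1 - \<alpha>) * S x t w i)) * x t i)"
      by (simp add: P_def sum_distrib_left mult_ac)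
    also have "\<dots> \<le> (\<Sum>i<m. Se x t (\<phi> y) i * x t i)"
      by (rule sum_mono, rule mult_right_mono) (use Sege xpos in \<open>auto simp: less_imp_le\<close>)
    finally show ?thesis .
  qed
  have "(\<Prod>t<n. ((1 - dl t) * (1 - \<alpha>)) * P t) \<le> RR n (\<phi> y)"
    unfolding RR_eq
    by (rule prod_mono) (use fac P0 d1 a1 in auto)
  moreover have "(\<Prod>t<n. ((1 - dl t) * (1 - \<alpha>)) * P t) = (\<Prod>t<n. (1 - dl t)) * (1 - \<alpha>)^n * WW n w"
    by (simp add: prod.distrib WW_eq P_def)
  moreover have "1 / (real n + 1) \<le> (\<Prod>t<n. (1 - dl t))"
  proof -
    have "(\<Prod>t<n. (real t + 1) / (real t + 2)) \<le> (\<Prod>t<n. (1 - dl t))"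
      by (rule prod_mono) (use dl_frac in auto)
    then show ?thesis by (simp add: prod_frac)
  qed
  moreover have "1 / (real n + 1) \<le> (1 - \<alpha>)^n" unfolding \<alpha>_def by (rule bern)
  moreover have "0 \<le> WW n w" using less_imp_le[OF WW_pos[OF w, of n]] .
  ultimately show ?thesis
  proof -
    assume h1: "(\<Prod>t<n. ((1 - dl t) * (1 - \<alpha>)) * P t) \<le> RR n (\<phi> y)"
      and h2: "(\<Prod>t<n. ((1 - dl t) * (1 - \<alpha>)) * P t) = (\<Prod>t<n. (1 - dl t)) * (1 - \<alpha>)^n * WW n w"
      and h3: "1 / (real n + 1) \<le> (\<Prod>t<n. (1 - dl t))"
      and h4: "1 / (real n + 1) \<le> (1 - \<alpha>)^n" and h5: "0 \<le> WW n w"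
    have "1 / (real n + 1) * (1 / (real n + 1)) \<le> (\<Prod>t<n. (1 - dl t)) * (1 - \<alpha>)^n"
    proof (rule mult_mono[OF h3 h4])
      have "0 < 1 / (real n + 1)" by simp
      then show "0 \<le> (\<Prod>t<n. (1 - dl t))" using h3 by linarith
      show "0 \<le> 1 / (real n + 1)" by simp
    qed
    then have "(1 / (real n + 1))^2 * WW n w \<le> (\<Prod>t<n. (1 - dl t)) * (1 - \<alpha>)^n * WW n w"
      by (intro mult_right_mono h5) (simp add: power2_eq_square)
    then show ?thesis using h1 h2 by simp
  qed
qed

abbreviation "II n \<equiv> (\<integral>y. RR n (\<phi> y) \<partial>nu m k)"

lemma RR_phi_meas: "(\<lambda>y. RR n (\<phi> y)) \<in> borel_measurable (lebesgue_coords m k)"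
  by (rule measurable_compose[OF phi_meas RR_meas])

lemma Se_phi_meas: "(\<lambda>y. Se x t (\<phi> y) i) \<in> borel_measurable (lebesgue_coords m k)"
  by (rule measurable_compose[OF phi_meas Se_meas])

lemma int_RR: "integrable (nu m k) (\<lambda>y. RR n (\<phi> y))"
  by (rule integrable_nu[OF m2 RR_phi_meas, where B="BB n"])
     (use RR_bounds[OF phi_ps] in auto)

lemma int_SeRR: "i < m \<Longrightarrow> integrable (nu m k) (\<lambda>y. Se x t (\<phi> y) i * RR t (\<phi> y))"
proof (rule integrable_nu[OF m2 _, where B="BB t"])
  show "(\<lambda>y. Se x t (\<phi> y) i * RR t (\<phi> y)) \<in> borel_measurable (lebesgue_coords m k)"
    by (intro borel_measurable_times Se_phi_meas RR_phi_meas)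
  fix y assume i: "i < m" and y: "y \<in> coord_domain m k"
  have a: "0 \<le> Se x t (\<phi> y) i" "Se x t (\<phi> y) i \<le> 1" using Se_bounds[OF phi_ps[OF y] i] by auto
  have b: "0 \<le> RR t (\<phi> y)" "RR t (\<phi> y) \<le> BB t" using RR_bounds[OF phi_ps[OF y]] by auto
  have "Se x t (\<phi> y) i * RR t (\<phi> y) \<le> 1 * BB t" by (rule mult_mono) (use a b in auto)
  then show "\<bar>Se x t (\<phi> y) i * RR t (\<phi> y)\<bar> \<le> BB t" using a b by simp
qed

lemma II_lower:
  assumes w: "w \<in> paramspace m k"
  shows "(1 / (real n + 1))^2 * WW n w * (1 / (real m * (real n + 1)))^(k * (m - 1)) \<le> II n"
proof -
  define \<alpha> where "\<alpha> = 1 / (real n + 1)"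
  have a0: "0 \<le> \<alpha>" and a1: "\<alpha> \<le> 1" unfolding \<alpha>_def by (auto simp: field_simps)
  have "(1 / (real n + 1))^2 * WW n w * measure (lebesgue_coords m k) (Abox w \<alpha>) \<le> II n"
  proof (rule int_lower[OF m2 int_RR])
    show "\<And>y. y \<in> coord_domain m k \<Longrightarrow> 0 \<le> RR n (\<phi> y)" using RR_bounds[OF phi_ps] by auto
    show "\<And>y. y \<in> Abox w \<alpha> \<Longrightarrow> (1 / (real n + 1))^2 * WW n w \<le> RR n (\<phi> y)"
      using RR_lower[OF w] unfolding \<alpha>_def by auto
    show "Abox w \<alpha> \<subseteq> coord_domain m k" by (rule Abox_sub_D[OF w a0 a1])
    show "Abox w \<alpha> \<in> sets (lebesgue_coords m k)" by (rule box_sets)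
    show "0 \<le> (1 / (real n + 1))^2 * WW n w" using less_imp_le[OF WW_pos[OF w, of n]] by simp
  qed
  moreover have "measure (lebesgue_coords m k) (Abox w \<alpha>) = (\<alpha> / real m) ^ (k * (m - 1))"
    using box_measure[of "\<alpha> / real m" m k "\<lambda>p. (1 - \<alpha>) * w (fst p) (snd p)"] a0 by simp
  moreover have "\<alpha> / real m = 1 / (real m * (real n + 1))" unfolding \<alpha>_def by simp
  ultimately show ?thesis by simp
qed

lemma II_pos: "0 < II n"
proof -
  define w0 where "w0 = (\<lambda>j\<in>{..<k}. \<lambda>i\<in>{..<m}. if i = 0 then 1 else (0::real))"
  have w0: "w0 \<in> paramspace m k"
    using m2 by (auto simp: w0_def paramspace_def asset_simplex_def)
  have "0 < (1 / (real n + 1))^2 * WW n w0 * (1 / (real m * (real n + 1)))^(k * (m - 1))"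
    using WW_pos[OF w0] m2 by simp
  then show ?thesis using II_lower[OF w0, of n] by linarith
qed

lemma univ_eq: "univ m k Se x t i = (\<integral>y. Se x t (\<phi> y) i * RR t (\<phi> y) \<partial>nu m k) / II t"
proof -
  have 1: "(\<integral>w. Se x t w i * RR t w \<partial>param_measure m k) = (\<integral>y. Se x t (\<phi> y) i * RR t (\<phi> y) \<partial>nu m k)"
    by (rule integral_transfer[OF m2], intro borel_measurable_times Se_meas RR_meas)
  have 2: "(\<integral>w. RR t w \<partial>param_measure m k) = II t"
    by (rule integral_transfer[OF m2], rule RR_meas)
  show ?thesis unfolding univ_def using 1 2 by simp
qed

lemma pdot_univ: "pdot m (univ m k Se x t) (x t) = II (Suc t) / II t"
proof -
  have J: "(\<Sum>i<m. (\<integral>y. Se x t (\<phi> y) i * RR t (\<phi> y) \<partial>nu m k) * x t i) = II (Suc t)"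
  proof -
    have "(\<Sum>i<m. (\<integral>y. Se x t (\<phi> y) i * RR t (\<phi> y) \<partial>nu m k) * x t i)
        = (\<Sum>i<m. (\<integral>y. Se x t (\<phi> y) i * RR t (\<phi> y) * x t i \<partial>nu m k))"
      by simp
    also have "\<dots> = (\<integral>y. (\<Sum>i<m. Se x t (\<phi> y) i * RR t (\<phi> y) * x t i) \<partial>nu m k)"
      by (rule Bochner_Integration.integral_sum[symmetric]) (use int_SeRR in auto)
    also have "\<dots> = II (Suc t)"
      by (rule Bochner_Integration.integral_cong) (simp_all add: RR_Suc sum_distrib_left mult_ac)
    finally show ?thesis .
  qed
  have "pdot m (univ m k Se x t) (x t) = (\<Sum>i<m. (\<integral>y. Se x t (\<phi> y) i * RR t (\<phi> y) \<partial>nu m k) * x t i) / II t"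
    unfolding pdot_def univ_eq by (simp add: sum_divide_distrib)
  then show ?thesis using J by simp
qed

lemma wealth_univ: "wealth m (univ m k Se) x n = II n"
proof (induction n)
  case 0
  interpret prob_space "nu m k" by (rule prob_nu[OF m2])
  show ?case using prob_space by (simp add: wealth_def)
next
  case (Suc n)
  have "wealth m (univ m k Se) x (Suc n) = wealth m (univ m k Se) x n * pdot m (univ m k Se x n) (x n)"
    by (simp add: wealth_def)
  also have "\<dots> = II (Suc n)" using Suc II_pos[of n] by (simp add: pdot_univ)
  finally show ?case .
qed

lemma growth_bound:
  assumes n: "n \<ge> 1" and w: "w \<in> paramspace m k"
  shows "growth m (fix_param S w) x n - eta m k n \<le> growth m (univ m k Se) x n"
proof -
  define d where "d = k * (m - 1)"
  define c where "c = (1 / (real n + 1))^2 * (1 / (real m * (real n + 1)))^d"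
  have c0: "0 < c" unfolding c_def using m2 by simp
  have W0: "0 < WW n w" by (rule WW_pos[OF w])
  have le: "c * WW n w \<le> II n" using II_lower[OF w, of n] unfolding c_def d_def by (simp add: mult_ac)
  have cw: "0 < c * WW n w" using c0 W0 by simp
  have "ln (c * WW n w) \<le> ln (II n)"
    by (subst ln_le_cancel_iff) (use cw II_pos[of n] le in auto)
  then have l1: "ln c + ln (WW n w) \<le> ln (II n)" using c0 W0 by (simp add: ln_mult)
  have lc: "ln c = - (2 * ln (real n + 1) + real d * ln (real m * (real n + 1)))"
  proof -
    have p1: "0 < 1 / (real n + 1)" by simp
    have p2: "0 < 1 / (real m * (real n + 1))" using m2 by simp
    have "ln c = ln ((1 / (real n + 1))^2) + ln ((1 / (real m * (real n + 1)))^d)"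
    proof -
      have lm: "ln (a * b) = ln a + ln b" if "0 < a" "0 < b" for a b :: real
        using that by (simp add: ln_mult)
      show ?thesis unfolding c_def by (rule lm) (use p1 p2 in simp_all)
    qed
    also have "\<dots> = 2 * ln (1 / (real n + 1)) + real d * ln (1 / (real m * (real n + 1)))"
      using p1 p2 by (simp add: ln_realpow)
    also have "ln (1 / (real n + 1)) = - ln (real n + 1)"
      by (simp add: ln_div)
    also have "ln (1 / (real m * (real n + 1))) = - ln (real m * (real n + 1))"
      using m2 by (subst ln_div) auto
    finally show ?thesis by simp
  qed
  have "growth m (fix_param S w) x n - eta m k n = (ln (WW n w) - (2 * ln (real n + 1) + real d * ln (real m * (real n + 1)))) / real n"
    by (simp add: growth_def eta_def d_def diff_divide_distrib)
  also have "\<dots> \<le> ln (II n) / real n"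
    using l1 lc n by (intro divide_right_mono) auto
  also have "\<dots> = growth m (univ m k Se) x n" by (simp add: growth_def wealth_univ)
  finally show ?thesis .
qed

end



lemma main_side:
  fixes v :: "nat \<Rightarrow> real^'q::finite" and f :: "real^'q \<Rightarrow> nat \<Rightarrow> real"
  assumes m2: "m \<ge> 2" and fb: "\<forall>z. \<forall>j<k. 0 \<le> f z j \<and> f z j \<le> 1"
    and fs: "\<forall>z. (\<Sum>j<k. f z j) = 1"
  shows "universalizable m k (CRP_side k v f)"
  unfolding universalizable_def universalization_def
proof (intro allI impI)
  fix \<epsilon> :: real assume e: "0 < \<epsilon> \<and> \<epsilon> < 1"
  show "\<exists>\<eta>. \<eta> \<longlonglongrightarrow> 0 \<and> (\<forall>n\<ge>1. \<forall>x. valid_market m x \<longrightarrow>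
          (\<forall>w\<in>paramspace m k. growth m (fix_param (CRP_side k v f) w) x n - \<eta> n
             \<le> growth m (univ m k (eps_mod m \<epsilon> (CRP_side k v f))) x n))"
  proof (intro exI[of _ "eta m k"] conjI allI impI ballI)
    show "eta m k \<longlonglongrightarrow> 0" by (rule eta_tendsto[OF m2])
    fix n :: nat and x w assume n: "1 \<le> n" and vm: "valid_market m x" and w: "w \<in> paramspace m k"
    show "growth m (fix_param (CRP_side k v f) w) x n - eta m k n
             \<le> growth m (univ m k (eps_mod m \<epsilon> (CRP_side k v f))) x n"
      by (rule growth_bound[OF m2 fb fs vm _ _ n w]) (use e in auto)
  qed
qed

lemma CRP_eq: "CRP = CRP_side 1 v (\<lambda>_ _. 1)"
  by (simp add: CRP_def CRP_side_def fun_eq_iff)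

theorem mainTheorem8:
  fixes m :: nat
  assumes "m \<ge> 2"
  shows "universalizable m 1 CRP \<and>
         (\<forall>(k::nat) (v :: nat \<Rightarrow> real^'q::finite) (f :: real^'q \<Rightarrow> nat \<Rightarrow> real).
            k \<ge> 1 \<longrightarrow> (\<forall>z. \<forall>j<k. 0 \<le> f z j \<and> f z j \<le> 1) \<longrightarrow> (\<forall>z. (\<Sum>j<k. f z j) = 1) \<longrightarrow>
            universalizable m k (CRP_side k v f))"
proof
  have "universalizable m 1 (CRP_side 1 (\<lambda>_. 0 :: real^'q) (\<lambda>_ _. 1))"
    by (rule main_side[OF assms]) auto
  then show "universalizable m 1 CRP" by (simp only: CRP_eq[of "\<lambda>_. 0 :: real^'q", symmetric])
  show "\<forall>(k::nat) (v :: nat \<Rightarrow> real^'q::finite) (f :: real^'q \<Rightarrow> nat \<Rightarrow> real).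
            k \<ge> 1 \<longrightarrow> (\<forall>z. \<forall>j<k. 0 \<le> f z j \<and> f z j \<le> 1) \<longrightarrow> (\<forall>z. (\<Sum>j<k. f z j) = 1) \<longrightarrow>
            universalizable m k (CRP_side k v f)"
    using main_side[OF assms] by blast
qed


end
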